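(* Let $b\ge3$, $1\le j\le b-1$, $\ell\in\{2,\dots,b\}$. For $i=1,\dots,\ell$ let $I_i=[a_i,b_i]\subseteq[0,1]$ and $J_i=[c_i,d_i]\subseteq[0,1]$ be nonempty intervals, and fix numbers $\bar p_{\ell+1},\dots,\bar p_b,\bar q_{\ell+1},\dots,\bar q_b$. Let $D$ be the set of pairs $(p,q)$ of probability vectors in $\mathbb R^b$ with $p_i\in I_i$, $q_i\in J_i$ for $i\le\ell$ and $p_i=\bar p_i$, $q_i=\bar q_i$ for $i>\ell$. If $(\bar p;\bar q)\in D$ is a maximum point of $\Psi_j$ on $D$, then either $\bar p_i=\bar p_h$ and $\bar q_i=\bar q_h$ for all $i,h\in\{1,\dots,\ell\}$, or the maximum of $\Psi_j$ on $D$ is also attained at some point $(p';q')\in D$ for which there is an index $i\in\{1,\dots,\ell\}$ with $p'_i\in\{a_i,b_i\}$ or $q'_i\in\{c_i,d_i\}$.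
   Context: For an integer $1\le j\le b-1$ and vectors $p,q\in\mathbb R^b$, $$\Psi_j(p;q)=\frac{1}{(b-j-1)!}\sum_{\sigma\in S_b}\Big(p_{\sigma(1)}\cdots p_{\sigma(j)}\,q_{\sigma(j+1)}+q_{\sigma(1)}\cdots q_{\sigma(j)}\,p_{\sigma(j+1)}\Big),$$ where $S_b$ is the set of permutations of $\{1,\dots,b\}$. *)

theory Defs
  imports Complex_Main "HOL-Combinatorics.Permutations"
begin

text \<open>Vectors in R^b are functions nat => real, coordinates 1..b.\<close>

definition Psi :: "nat \<Rightarrow> nat \<Rightarrow> (nat \<Rightarrow> real) \<Rightarrow> (nat \<Rightarrow> real) \<Rightarrow> real" where
  "Psi b j p q = (1 / fact (b - j - 1)) *
     (\<Sum>\<sigma> \<in> {\<sigma>. \<sigma> permutes {1..b}}.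
        (\<Prod>k=1..j. p (\<sigma> k)) * q (\<sigma> (j+1)) + (\<Prod>k=1..j. q (\<sigma> k)) * p (\<sigma> (j+1)))"

definition prob_vec :: "nat \<Rightarrow> (nat \<Rightarrow> real) \<Rightarrow> bool" where
  "prob_vec b p \<longleftrightarrow> (\<forall>i\<in>{1..b}. 0 \<le> p i) \<and> (\<Sum>i=1..b. p i) = 1"

definition domD :: "nat \<Rightarrow> nat \<Rightarrow> (nat \<Rightarrow> real) \<Rightarrow> (nat \<Rightarrow> real) \<Rightarrow> (nat \<Rightarrow> real) \<Rightarrow> (nat \<Rightarrow> real)
     \<Rightarrow> (nat \<Rightarrow> real) \<Rightarrow> (nat \<Rightarrow> real) \<Rightarrow> ((nat \<Rightarrow> real) \<times> (nat \<Rightarrow> real)) set" where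
  "domD b l a bu c d pbar qbar = {(p, q). prob_vec b p \<and> prob_vec b q \<and>
     (\<forall>i\<in>{1..l}. a i \<le> p i \<and> p i \<le> bu i \<and> c i \<le> q i \<and> q i \<le> d i) \<and>
     (\<forall>i\<in>{l<..b}. p i = pbar i \<and> q i = qbar i)}"

end

theory Submission imports Defs "HOL-Computational_Algebra.Polynomial" begin

lemma Psi_swap:
  assumes "t permutes {1..b}"
  shows "Psi b j (p \<circ> t) (q \<circ> t) = Psi b j p q"
  unfolding Psi_def
  by (subst (2) setum_permutations_compose_left[OF assms]) (simp add: o_def)

lemma Psi_poly:
  fixes p q :: "real \<Rightarrow> nat \<Rightarrow> real" and PP QQ :: "nat \<Rightarrow> real poly"
  assumes "j \<le> b - 1"
    and pp: "\<And>s m. p s m = poly (PP m) s" and qq: "\<And>s m. q s m = poly (QQ m) s"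
    and d1: "\<And>m. degree (PP m) \<le> 1" and d2: "\<And>m. degree (QQ m) \<le> 1"
    and sP: "(\<Sum>m\<in>{1..b}. degree (PP m)) \<le> 2" and sQ: "(\<Sum>m\<in>{1..b}. degree (QQ m)) \<le> 2"
  shows "\<exists>Pol. degree Pol \<le> 3 \<and> (\<forall>s. Psi b j (p s) (q s) = poly Pol s)"
proof -
  let ?T = "\<lambda>\<sigma>. (\<Prod>k=1..j. PP (\<sigma> k)) * QQ (\<sigma> (j+1)) + (\<Prod>k=1..j. QQ (\<sigma> k)) * PP (\<sigma> (j+1))"
  define Pol where "Pol = smult (1 / fact (b - j - 1)) (\<Sum>\<sigma> \<in> {\<sigma>. \<sigma> permutes {1..b}}. ?T \<sigma>)"
  have ev: "Psi b j (p s) (q s) = poly Pol s" for s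
    unfolding Pol_def Psi_def by (simp add: poly_sum poly_prod pp qq)
  have pr: "degree (\<Prod>k=1..j. R (\<sigma> k)) \<le> 2" if s: "\<sigma> permutes {1..b}"
      and R: "(\<Sum>m\<in>{1..b}. degree (R m)) \<le> 2" for \<sigma> and R :: "nat \<Rightarrow> real poly"
  proof -
    have inj: "inj_on \<sigma> {1..j}" using permutes_inj[OF s] by (auto simp: inj_on_def inj_def)
    have sub: "\<sigma> ` {1..j} \<subseteq> {1..b}"
    proof (rule image_subsetI)
      fix x assume "x \<in> {1..j}"
      then have "x \<in> {1..b}" using assms(1) by auto
      then show "\<sigma> x \<in> {1..b}" using permutes_in_image[OF s] by blast
    qed
    have "degree (\<Prod>k=1..j. R (\<sigma> k)) \<le> (\<Sum>k=1..j. degree (R (\<sigma> k)))"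
      using degree_prod_sum_le[of "{1..j}" "\<lambda>k. R (\<sigma> k)"] by (simp add: o_def)
    also have "\<dots> = (\<Sum>m\<in>\<sigma> ` {1..j}. degree (R m))"
      using sum.reindex[OF inj, of "\<lambda>m. degree (R m)"] by simp
    also have "\<dots> \<le> (\<Sum>m\<in>{1..b}. degree (R m))"
      by (rule sum_mono2) (use sub in auto)
    finally show ?thesis using R by linarith
  qed
  have "degree (?T \<sigma>) \<le> 3" if s: "\<sigma> permutes {1..b}" for \<sigma>
  proof -
    have a: "degree ((\<Prod>k=1..j. PP (\<sigma> k)) * QQ (\<sigma> (j+1))) \<le> 3"
      using degree_mult_le[of "\<Prod>k=1..j. PP (\<sigma> k)" "QQ (\<sigma> (j+1))"] pr[OF s sP] d2[of "\<sigma> (j+1)"]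
      by linarith
    have b: "degree ((\<Prod>k=1..j. QQ (\<sigma> k)) * PP (\<sigma> (j+1))) \<le> 3"
      using degree_mult_le[of "\<Prod>k=1..j. QQ (\<sigma> k)" "PP (\<sigma> (j+1))"] pr[OF s sQ] d1[of "\<sigma> (j+1)"]
      by linarith
    show ?thesis using degree_add_le[OF a b] .
  qed
  then have "degree (\<Sum>\<sigma> \<in> {\<sigma>. \<sigma> permutes {1..b}}. ?T \<sigma>) \<le> 3"
    by (intro degree_sum_le) (auto simp: finite_permutations)
  then have "degree Pol \<le> 3" unfolding Pol_def using degree_smult_le order_trans by blast
  with ev show ?thesis by blast
qed

lemma poly3:
  fixes Pol :: "real poly"
  assumes "degree Pol \<le> 3"
  shows "poly Pol s = coeff Pol 0 + coeff Pol 1 * s + coeff Pol 2 * s^2 + coeff Pol 3 * s^3"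
proof -
  have "poly Pol s = (\<Sum>i\<le>3. coeff Pol i * s ^ i)"
    unfolding poly_altdef
    by (rule sum.mono_neutral_left) (use assms in \<open>auto simp: coeff_eq_0\<close>)
  then show ?thesis by (simp add: numeral_eq_Suc)
qed

lemma push_up:
  fixes lo hi m e :: "nat \<Rightarrow> real"
  assumes "finite K" and f1: "\<forall>k\<in>K. lo k \<le> m k + e k \<and> m k + e k \<le> hi k"
    and nz: "\<exists>k\<in>K. e k \<noteq> 0"
  shows "\<exists>s\<ge>1. (\<forall>k\<in>K. lo k \<le> m k + s*e k \<and> m k + s*e k \<le> hi k) \<and>
           (\<exists>k\<in>K. m k + s*e k = lo k \<or> m k + s*e k = hi k)"
proof -
  define bd where "bd k = (if e k > 0 then (hi k - m k)/e k else (lo k - m k)/e k)" for k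
  define B where "B = bd ` {k\<in>K. e k \<noteq> 0}"
  have fB: "finite B" "B \<noteq> {}" using assms unfolding B_def by auto
  define s where "s = Min B"
  obtain k0 where k0: "k0 \<in> K" "e k0 \<noteq> 0" "s = bd k0"
    using Min_in[OF fB] unfolding s_def B_def by auto
  have le: "s \<le> bd k" if "k \<in> K" "e k \<noteq> 0" for k
    unfolding s_def B_def using fB that by (intro Min_le) (auto simp: B_def)
  have ge1: "1 \<le> bd k" if "k \<in> K" "e k \<noteq> 0" for k
    using f1 that by (auto simp: bd_def field_simps)
  have s1: "1 \<le> s" using ge1[OF k0(1,2)] le k0 by auto
  have feas: "lo k \<le> m k + s*e k \<and> m k + s*e k \<le> hi k" if k: "k \<in> K" for k
  proof (cases "e k = 0")
    case True then show ?thesis using f1 k by auto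
  next
    case False
    have sl: "s \<le> bd k" using le[OF k False] .
    show ?thesis
    proof (cases "e k > 0")
      case True
      have "s * e k \<le> hi k - m k" using sl True by (simp add: bd_def field_simps)
      moreover have "e k \<le> s * e k" using s1 True by (simp add: mult_right_mono)
      ultimately show ?thesis using f1 k by auto
    next
      case neg: False
      then have en: "e k < 0" using False by auto
      have "s * e k \<ge> lo k - m k" using sl en by (simp add: bd_def field_simps)
      moreover have "e k \<ge> s * e k" using s1 en by (simp add: mult_right_mono_neg)
      ultimately show ?thesis using f1 k by auto
    qed
  qed
  have hit: "m k0 + s*e k0 = lo k0 \<or> m k0 + s*e k0 = hi k0"
    using k0 by (auto simp: bd_def field_simps split: if_splits)
  show ?thesis using s1 feas hit k0(1) by blast
qed

lemma push_down:
  fixes lo hi m e :: "nat \<Rightarrow> real"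
  assumes "finite K" and f1: "\<forall>k\<in>K. lo k \<le> m k + e k \<and> m k + e k \<le> hi k"
    and nz: "\<exists>k\<in>K. e k \<noteq> 0"
  shows "\<exists>s\<le>1. (\<forall>k\<in>K. lo k \<le> m k + s*e k \<and> m k + s*e k \<le> hi k) \<and>
           (\<exists>k\<in>K. m k + s*e k = lo k \<or> m k + s*e k = hi k)"
proof -
  obtain s where s: "s \<ge> 1" "\<forall>k\<in>K. lo k \<le> (m k + 2 * e k) + s*(- e k) \<and> (m k + 2 * e k) + s*(- e k) \<le> hi k"
     "\<exists>k\<in>K. (m k + 2 * e k) + s*(- e k) = lo k \<or> (m k + 2 * e k) + s*(- e k) = hi k"
  proof -
    have f1': "\<forall>k\<in>K. lo k \<le> (m k + 2 * e k) + (- e k) \<and> (m k + 2 * e k) + (- e k) \<le> hi k"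
      using f1 by (simp add: algebra_simps)
    have nz': "\<exists>k\<in>K. - e k \<noteq> 0" using nz by simp
    show ?thesis using push_up[OF assms(1) f1' nz'] that by blast
  qed
  have eq: "(m k + 2 * e k) + s*(- e k) = m k + (2 - s) * e k" for k by algebra
  have s2: "\<forall>k\<in>K. lo k \<le> m k + (2 - s)*e k \<and> m k + (2 - s)*e k \<le> hi k"
     "\<exists>k\<in>K. m k + (2 - s)*e k = lo k \<or> m k + (2 - s)*e k = hi k"
    using s(2,3) unfolding eq by auto
  show ?thesis using s(1) s2 by (intro exI[of _ "2 - s"]) auto
qed

lemma between:
  fixes lo hi m e x y s :: real
  assumes "lo \<le> m + x*e" "m + x*e \<le> hi" "lo \<le> m + y*e" "m + y*e \<le> hi" "x \<le> s" "s \<le> y"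
  shows "lo \<le> m + s*e \<and> m + s*e \<le> hi"
proof (cases "e \<ge> 0")
  case True
  then have "x*e \<le> s*e" "s*e \<le> y*e" using assms by (auto intro: mult_right_mono)
  then show ?thesis using assms by auto
next
  case False
  then have "x*e \<ge> s*e" "s*e \<ge> y*e" using assms by (auto intro: mult_right_mono_neg)
  then show ?thesis using assms by auto
qed

lemma sum_two:
  fixes f g :: "nat \<Rightarrow> real"
  assumes "finite A" "i \<in> A" "h \<in> A" "i \<noteq> h" "\<And>k. k \<noteq> i \<Longrightarrow> k \<noteq> h \<Longrightarrow> f k = g k"
    "f i + f h = g i + g h"
  shows "sum f A = sum g A"
proof -
  have 1: "sum f A = f i + f h + sum f (A - {i} - {h})"
    using assms(1-4) by (simp add: sum.remove[of A i] sum.remove[of "A - {i}" h])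
  have 2: "sum f (A - {i} - {h}) = sum g (A - {i} - {h})"
    using assms(5) by (intro sum.cong) auto
  have 3: "sum g A = g i + g h + sum g (A - {i} - {h})"
    using assms(1-4) by (simp add: sum.remove[of A i] sum.remove[of "A - {i}" h])
  show ?thesis using 1 2 3 assms(6) by simp
qed

theorem mainTheorem5:
  fixes b j l :: nat and a bu c d pbar qbar :: "nat \<Rightarrow> real"
  assumes "b \<ge> 3" and "1 \<le> j" and "j \<le> b - 1" and "2 \<le> l" and "l \<le> b"
    and "\<forall>i\<in>{1..l}. 0 \<le> a i \<and> a i \<le> bu i \<and> bu i \<le> 1"
    and "\<forall>i\<in>{1..l}. 0 \<le> c i \<and> c i \<le> d i \<and> d i \<le> 1"
    and "(pbar, qbar) \<in> domD b l a bu c d pbar qbar"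
    and "\<forall>(p, q) \<in> domD b l a bu c d pbar qbar. Psi b j p q \<le> Psi b j pbar qbar"
  shows "(\<forall>i\<in>{1..l}. \<forall>h\<in>{1..l}. pbar i = pbar h \<and> qbar i = qbar h) \<or>
         (\<exists>p' q'. (p', q') \<in> domD b l a bu c d pbar qbar \<and> Psi b j p' q' = Psi b j pbar qbar \<and>
            (\<exists>i\<in>{1..l}. p' i \<in> {a i, bu i} \<or> q' i \<in> {c i, d i}))"
proof -
  have pD: "prob_vec b pbar" "prob_vec b qbar"
    "\<forall>i\<in>{1..l}. a i \<le> pbar i \<and> pbar i \<le> bu i \<and> c i \<le> qbar i \<and> qbar i \<le> d i"
    using assms(8) unfolding domD_def by auto
  show ?thesis
  proof (cases "\<forall>i\<in>{1..l}. \<forall>h\<in>{1..l}. pbar i = pbar h \<and> qbar i = qbar h")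
    case True then show ?thesis by blast
  next
    case False
    then obtain i h where ih: "i \<in> {1..l}" "h \<in> {1..l}" "pbar i \<noteq> pbar h \<or> qbar i \<noteq> qbar h"
      by blast
    then have ihne: "i \<noteq> h" by auto
    have ihb: "i \<in> {1..b}" "h \<in> {1..b}" using ih assms(5) by auto
    show ?thesis
    proof (cases "pbar i \<in> {a i, bu i} \<or> qbar i \<in> {c i, d i} \<or> pbar h \<in> {a h, bu h} \<or> qbar h \<in> {c h, d h}")
      case True
      then have "\<exists>i\<in>{1..l}. pbar i \<in> {a i, bu i} \<or> qbar i \<in> {c i, d i}" using ih by blast
      then show ?thesis using assms(8) by blast
    next
      case interior: False
      define P where "P = pbar i + pbar h"
      define Q where "Q = qbar i + qbar h"
      define u0 where "u0 = (pbar i - pbar h) / 2"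
      define v0 where "v0 = (qbar i - qbar h) / 2"
      define ps where "ps s = pbar(i := P/2 + s*u0, h := P/2 - s*u0)" for s
      define qs where "qs s = qbar(i := Q/2 + s*v0, h := Q/2 - s*v0)" for s
      define m :: "nat \<Rightarrow> real" where "m k = (if k = 0 then P/2 else if k = 1 then P/2 else Q/2)" for k
      define e :: "nat \<Rightarrow> real" where "e k = (if k = 0 then u0 else if k = 1 then -u0 else if k = 2 then v0 else -v0)" for k
      define lo :: "nat \<Rightarrow> real" where "lo k = (if k = 0 then a i else if k = 1 then a h else if k = 2 then c i else c h)" for k
      define hi :: "nat \<Rightarrow> real" where "hi k = (if k = 0 then bu i else if k = 1 then bu h else if k = 2 then d i else d h)" for k
      define feas where "feas s \<longleftrightarrow> (\<forall>k\<in>{0..3::nat}. lo k \<le> m k + s*e k \<and> m k + s*e k \<le> hi k)" for s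
      have K: "{0..3::nat} = {0,1,2,3}" by auto
      have psi: "ps s i = P/2 + s*u0" "ps s h = P/2 - s*u0" "\<And>k. k \<noteq> i \<Longrightarrow> k \<noteq> h \<Longrightarrow> ps s k = pbar k"
        for s using ihne by (auto simp: ps_def)
      have qsi: "qs s i = Q/2 + s*v0" "qs s h = Q/2 - s*v0" "\<And>k. k \<noteq> i \<Longrightarrow> k \<noteq> h \<Longrightarrow> qs s k = qbar k"
        for s using ihne by (auto simp: qs_def)
      have feas_iff: "feas s \<longleftrightarrow> a i \<le> ps s i \<and> ps s i \<le> bu i \<and> a h \<le> ps s h \<and> ps s h \<le> bu h \<and>
          c i \<le> qs s i \<and> qs s i \<le> d i \<and> c h \<le> qs s h \<and> qs s h \<le> d h" for s
        unfolding feas_def K psi qsi by (auto simp: m_def e_def lo_def hi_def algebra_simps)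
      have hit_iff: "(\<exists>k\<in>{0..3::nat}. m k + s*e k = lo k \<or> m k + s*e k = hi k) \<longleftrightarrow>
          (ps s i \<in> {a i, bu i} \<or> qs s i \<in> {c i, d i} \<or> ps s h \<in> {a h, bu h} \<or> qs s h \<in> {c h, d h})" for s
        unfolding K psi qsi by (auto simp: m_def e_def lo_def hi_def algebra_simps)
      have ps1: "ps 1 = pbar" "qs 1 = qbar"
        by (rule ext, simp add: ps_def P_def u0_def field_simps)+
           (rule ext, simp add: qs_def Q_def v0_def field_simps)
      have feas1: "feas 1" unfolding feas_iff ps1 using pD(3) ih by auto
      have nz: "\<exists>k\<in>{0..3::nat}. e k \<noteq> 0" using ih(3) unfolding K by (auto simp: e_def u0_def v0_def)
      have memD: "(ps s, qs s) \<in> domD b l a bu c d pbar qbar" if fs: "feas s" for s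
      proof -
        have fs': "a i \<le> ps s i" "ps s i \<le> bu i" "a h \<le> ps s h" "ps s h \<le> bu h"
          "c i \<le> qs s i" "qs s i \<le> d i" "c h \<le> qs s h" "qs s h \<le> d h"
          using fs unfolding feas_iff by auto
        have a0: "0 \<le> a i" "0 \<le> a h" "0 \<le> c i" "0 \<le> c h" using assms(6,7) ih by auto
        have pv: "prob_vec b (ps s)"
        proof -
          have "\<forall>k\<in>{1..b}. 0 \<le> ps s k"
          proof
            fix k assume k: "k \<in> {1..b}"
            show "0 \<le> ps s k"
            proof (cases "k = i \<or> k = h")
              case True then show ?thesis using fs' a0 by auto
            next
              case False then show ?thesis using pD(1) k psi(3)[of k s] by (auto simp: prob_vec_def)
            qed
          qed
          moreover have "(\<Sum>k=1..b. ps s k) = (\<Sum>k=1..b. pbar k)"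
            by (rule sum_two[OF _ ihb ihne]) (auto simp: psi P_def)
          ultimately show ?thesis using pD(1) by (simp add: prob_vec_def)
        qed
        have qv: "prob_vec b (qs s)"
        proof -
          have "\<forall>k\<in>{1..b}. 0 \<le> qs s k"
          proof
            fix k assume k: "k \<in> {1..b}"
            show "0 \<le> qs s k"
            proof (cases "k = i \<or> k = h")
              case True then show ?thesis using fs' a0 by auto
            next
              case False then show ?thesis using pD(2) k qsi(3)[of k s] by (auto simp: prob_vec_def)
            qed
          qed
          moreover have "(\<Sum>k=1..b. qs s k) = (\<Sum>k=1..b. qbar k)"
            by (rule sum_two[OF _ ihb ihne]) (auto simp: qsi Q_def)
          ultimately show ?thesis using pD(2) by (simp add: prob_vec_def)
        qed
        have iv: "\<forall>k\<in>{1..l}. a k \<le> ps s k \<and> ps s k \<le> bu k \<and> c k \<le> qs s k \<and> qs s k \<le> d k"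
        proof
          fix k assume k: "k \<in> {1..l}"
          show "a k \<le> ps s k \<and> ps s k \<le> bu k \<and> c k \<le> qs s k \<and> qs s k \<le> d k"
          proof (cases "k = i \<or> k = h")
            case True then show ?thesis using fs' by auto
          next
            case False then show ?thesis using pD(3) k psi(3)[of k s] qsi(3)[of k s] by auto
          qed
        qed
        have ov: "\<forall>k\<in>{l<..b}. ps s k = pbar k \<and> qs s k = qbar k"
          using ih psi(3) qsi(3) by auto
        show ?thesis unfolding domD_def using pv qv iv ov by auto
      qed
      define PP where "PP k = (if k = i then [:P/2, u0:] else if k = h then [:P/2, -u0:] else [:pbar k:])" for k
      define QQ where "QQ k = (if k = i then [:Q/2, v0:] else if k = h then [:Q/2, -v0:] else [:qbar k:])" for k
      have dP: "degree (PP k) \<le> (if k = i then 1 else 0) + (if k = h then 1 else 0)" for k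
        using ihne by (auto simp: PP_def)
      have dQ: "degree (QQ k) \<le> (if k = i then 1 else 0) + (if k = h then 1 else 0)" for k
        using ihne by (auto simp: QQ_def)
      have sdeg: "(\<Sum>k\<in>{1..b}. ((if k = i then 1 else 0) + (if k = h then 1 else 0) :: nat)) = 2"
        using ihb by (simp add: sum.distrib)
      have sP: "(\<Sum>k\<in>{1..b}. degree (PP k)) \<le> 2"
        using sum_mono[of "{1..b}" "\<lambda>k. degree (PP k)", OF dP] sdeg by simp
      have sQ: "(\<Sum>k\<in>{1..b}. degree (QQ k)) \<le> 2"
        using sum_mono[of "{1..b}" "\<lambda>k. degree (QQ k)", OF dQ] sdeg by simp
      have d1: "degree (PP k) \<le> 1" "degree (QQ k) \<le> 1" for k
        using dP[of k] dQ[of k] ihne by (auto split: if_splits)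
      have pp: "ps s k = poly (PP k) s" for s k
        using ihne by (auto simp: PP_def ps_def algebra_simps)
      have qq: "qs s k = poly (QQ k) s" for s k
        using ihne by (auto simp: QQ_def qs_def algebra_simps)
      obtain Pol where Pol: "degree Pol \<le> 3" "\<forall>s. Psi b j (ps s) (qs s) = poly Pol s"
        using Psi_poly[OF assms(3) pp qq d1 sP sQ] by blast
      define F where "F s = Psi b j (ps s) (qs s)" for s
      have tr: "transpose i h permutes {1..b}" using ihb by (rule permutes_swap_id)
      have even: "F (-s) = F s" for s
      proof -
        have "ps (-s) = ps s \<circ> transpose i h"
          by (rule ext) (use ihne in \<open>auto simp: ps_def transpose_def\<close>)
        moreover have "qs (-s) = qs s \<circ> transpose i h"
          by (rule ext) (use ihne in \<open>auto simp: qs_def transpose_def\<close>)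
        ultimately
        show ?thesis unfolding F_def using Psi_swap[OF tr] by simp
      qed
      define c0 c1 c2 c3 where "c0 = coeff Pol 0" "c1 = coeff Pol 1" "c2 = coeff Pol 2" "c3 = coeff Pol 3"
      have Fpoly: "F s = c0 + c1 * s + c2 * s^2 + c3 * s^3" for s
        unfolding F_def c0_c1_c2_c3_def using Pol poly3 by auto
      have "c1 + c3 = 0" using even[of 1] unfolding Fpoly by simp
      moreover have "2*c1 + 8*c3 = 0" using even[of 2] unfolding Fpoly by simp
      ultimately have c13: "c1 = 0" "c3 = 0" by linarith+
      have Fq: "F s = c0 + c2 * s^2" for s using Fpoly c13 by simp
      have Fmax: "F s \<le> F 1" if "feas s" for s
        using assms(9) memD[OF that] unfolding F_def ps1 by auto
      obtain s1 where s1: "s1 \<ge> 1" "feas s1" "\<exists>k\<in>{0..3::nat}. m k + s1*e k = lo k \<or> m k + s1*e k = hi k"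
        using push_up[of "{0..3::nat}" lo m e hi] feas1 nz unfolding feas_def by auto
      obtain s0 where s0: "s0 \<le> 1" "feas s0" "\<exists>k\<in>{0..3::nat}. m k + s0*e k = lo k \<or> m k + s0*e k = hi k"
        using push_down[of "{0..3::nat}" lo m e hi] feas1 nz unfolding feas_def by auto
      have "s1 \<noteq> 1" using s1(3) interior unfolding hit_iff by (auto simp: ps1)
      then have s1g: "s1 > 1" using s1(1) by simp
      have "s0 \<noteq> 1" using s0(3) interior unfolding hit_iff by (auto simp: ps1)
      then have s0l: "s0 < 1" using s0(1) by simp
      define s' where "s' = max s0 0"
      have fs': "feas s'"
        unfolding feas_def
      proof
        fix k :: nat assume k: "k \<in> {0..3}"
        show "lo k \<le> m k + s'*e k \<and> m k + s'*e k \<le> hi k"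
          using s0(2) feas1 k s0l unfolding feas_def s'_def
          by (intro between[of _ _ s0 _ _ 1]) auto
      qed
      have sq1: "s1^2 > 1" using s1g by (simp add: one_less_power)
      have sq2: "s'^2 < 1"
      proof (cases "s0 \<le> 0")
        case False
        then have "s0 * s0 < 1 * 1" using s0l by (intro mult_strict_mono) auto
        then show ?thesis using False by (simp add: s'_def max_def power2_eq_square)
      qed (simp add: s'_def max_def)
      have c2a: "c2 \<le> 0"
      proof (rule ccontr)
        assume "\<not> c2 \<le> 0"
        then have "c2 * 1 < c2 * s1^2" using sq1 by (intro mult_strict_left_mono) auto
        then show False using Fmax[OF s1(2)] unfolding Fq by simp
      qed
      have c2b: "c2 \<ge> 0"
      proof (rule ccontr)
        assume "\<not> c2 \<ge> 0"
        then have "c2 * 1 < c2 * s'^2" using sq2 by (intro mult_strict_left_mono_neg) auto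
        then show False using Fmax[OF fs'] unfolding Fq by simp
      qed
      have "F s1 = F 1" unfolding Fq using c2a c2b by simp
      then have eqv: "Psi b j (ps s1) (qs s1) = Psi b j pbar qbar" unfolding F_def ps1 .
      have "\<exists>k\<in>{1..l}. ps s1 k \<in> {a k, bu k} \<or> qs s1 k \<in> {c k, d k}"
        using s1(3) ih unfolding hit_iff by blast
      then show ?thesis using memD[OF s1(2)] eqv by blast
    qed
  qed
qed

end
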